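(* Let $(l_1:l_2:l_3:l_4)$ be a point on the tetragonal surface $\mathcal{K}^{\mathrm{Tet}}$ (over an algebraic closure of the base field). Then $K_2(l_1,l_2,l_3)=K_3(l_1,l_2,l_3)=K_4(l_1,l_2,l_3)=0$ if and only if $l_1=l_2=l_3=0$.
   Context: Let $k$ be a field of characteristic $\neq2,3$ and $\mu_1,\dots,\mu_4\in k$ nonzero squared theta constants with $\hat\mu_1=(\mu_1+\mu_2+\mu_3+\mu_4)/2$, $\hat\mu_2=(\mu_1+\mu_2-\mu_3-\mu_4)/2$, $\hat\mu_3=(\mu_1-\mu_2+\mu_3-\mu_4)/2$, $\hat\mu_4=(\mu_1-\mu_2-\mu_3+\mu_4)/2$ all nonzero, and $\mu_1\mu_4\neq\mu_2\mu_3$, $\mu_1\mu_3\neq\mu_2\mu_4$, $\mu_1\mu_2\neq\mu_3\mu_4$ (so that the associated squared Kummer surface is a genuine Kummer surface of a genus-2 Jacobian). Set $t=16\mu_1\mu_2\mu_3\mu_4\hat\mu_1\hat\mu_2\hat\mu_3\hat\mu_4$ and $r_1=(\mu_1\mu_3-\mu_2\mu_4)(\mu_1\mu_4-\mu_2\mu_3)$, $s_1=(\mu_1\mu_2-\mu_3\mu_4)(\mu_1\mu_2+\mu_3\mu_4)$, $r_2=(\mu_1\mu_2-\mu_3\mu_4)(\mu_1\mu_4-\mu_2\mu_3)$, $s_2=(\mu_1\mu_3-\mu_2\mu_4)(\mu_1\mu_3+\mu_2\mu_4)$, $r_3=(\mu_1\mu_2-\mu_3\mu_4)(\mu_1\mu_3-\mu_2\mu_4)$,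 $s_3=(\mu_1\mu_4-\mu_2\mu_3)(\mu_1\mu_4+\mu_2\mu_3)$. The tetragonal surface $\mathcal{K}^{\mathrm{Tet}}\subset\mathbb{P}^3$ is $4tL_1L_2L_3L_4=r_1^2(L_1L_2+L_3L_4)^2+r_2^2(L_1L_3+L_2L_4)^2+r_3^2(L_1L_4+L_2L_3)^2-2r_1s_1((L_1^2+L_2^2)L_3L_4+L_1L_2(L_3^2+L_4^2))-2r_2s_2((L_1^2+L_3^2)L_2L_4+L_1L_3(L_2^2+L_4^2))-2r_3s_3((L_1^2+L_4^2)L_2L_3+L_1L_4(L_2^2+L_3^2))$, which can be rewritten as $K_4-2K_3L_4+K_2L_4^2=0$ with $K_2=r_3^2L_1^2+r_2^2L_2^2+r_1^2L_3^2-2(r_3s_3L_2L_3+r_2s_2L_1L_3+r_1s_1L_1L_2)$, $K_3=r_1s_1(L_1^2+L_2^2)L_3+r_2s_2(L_1^2+L_3^2)L_2+r_3s_3(L_2^2+L_3^2)L_1+(2t-(r_1^2+r_2^2+r_3^2))L_1L_2L_3$, $K_4=r_3^2L_2^2L_3^2+r_2^2L_1^2L_3^2+r_1^2L_1^2L_2^2-2(r_3s_3L_1+r_2s_2L_2+r_1s_1L_3)L_1L_2L_3$. The vanishing of the homogeneous $K_i$ at a projective point does not depend on the representative. *)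

theory Defs
  imports "HOL-Computational_Algebra.Polynomial"
begin

definition hmu1 :: "'a::field \<Rightarrow> 'a \<Rightarrow> 'a \<Rightarrow> 'a \<Rightarrow> 'a" where
  "hmu1 m1 m2 m3 m4 = (m1 + m2 + m3 + m4) / 2"
definition hmu2 :: "'a::field \<Rightarrow> 'a \<Rightarrow> 'a \<Rightarrow> 'a \<Rightarrow> 'a" where
  "hmu2 m1 m2 m3 m4 = (m1 + m2 - m3 - m4) / 2"
definition hmu3 :: "'a::field \<Rightarrow> 'a \<Rightarrow> 'a \<Rightarrow> 'a \<Rightarrow> 'a" where
  "hmu3 m1 m2 m3 m4 = (m1 - m2 + m3 - m4) / 2"
definition hmu4 :: "'a::field \<Rightarrow> 'a \<Rightarrow> 'a \<Rightarrow> 'a \<Rightarrow> 'a" where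
  "hmu4 m1 m2 m3 m4 = (m1 - m2 - m3 + m4) / 2"

definition tT :: "'a::field \<Rightarrow> 'a \<Rightarrow> 'a \<Rightarrow> 'a \<Rightarrow> 'a" where
  "tT m1 m2 m3 m4 = 16 * m1 * m2 * m3 * m4 * hmu1 m1 m2 m3 m4 * hmu2 m1 m2 m3 m4
      * hmu3 m1 m2 m3 m4 * hmu4 m1 m2 m3 m4"

definition r1 :: "'a::field \<Rightarrow> 'a \<Rightarrow> 'a \<Rightarrow> 'a \<Rightarrow> 'a" where
  "r1 m1 m2 m3 m4 = (m1*m3 - m2*m4) * (m1*m4 - m2*m3)"
definition s1 :: "'a::field \<Rightarrow> 'a \<Rightarrow> 'a \<Rightarrow> 'a \<Rightarrow> 'a" where
  "s1 m1 m2 m3 m4 = (m1*m2 - m3*m4) * (m1*m2 + m3*m4)"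
definition r2 :: "'a::field \<Rightarrow> 'a \<Rightarrow> 'a \<Rightarrow> 'a \<Rightarrow> 'a" where
  "r2 m1 m2 m3 m4 = (m1*m2 - m3*m4) * (m1*m4 - m2*m3)"
definition s2 :: "'a::field \<Rightarrow> 'a \<Rightarrow> 'a \<Rightarrow> 'a \<Rightarrow> 'a" where
  "s2 m1 m2 m3 m4 = (m1*m3 - m2*m4) * (m1*m3 + m2*m4)"
definition r3 :: "'a::field \<Rightarrow> 'a \<Rightarrow> 'a \<Rightarrow> 'a \<Rightarrow> 'a" where
  "r3 m1 m2 m3 m4 = (m1*m2 - m3*m4) * (m1*m3 - m2*m4)"
definition s3 :: "'a::field \<Rightarrow> 'a \<Rightarrow> 'a \<Rightarrow> 'a \<Rightarrow> 'a" where
  "s3 m1 m2 m3 m4 = (m1*m4 - m2*m3) * (m1*m4 + m2*m3)"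

definition on_KTet :: "'a::field \<Rightarrow> 'a \<Rightarrow> 'a \<Rightarrow> 'a \<Rightarrow> 'a \<Rightarrow> 'a \<Rightarrow> 'a \<Rightarrow> 'a \<Rightarrow> bool" where
  "on_KTet m1 m2 m3 m4 L1 L2 L3 L4 \<longleftrightarrow>
    (let t = tT m1 m2 m3 m4;
         R1 = r1 m1 m2 m3 m4; S1 = s1 m1 m2 m3 m4;
         R2 = r2 m1 m2 m3 m4; S2 = s2 m1 m2 m3 m4;
         R3 = r3 m1 m2 m3 m4; S3 = s3 m1 m2 m3 m4
     in 4 * t * L1 * L2 * L3 * L4 =
        R1^2 * (L1*L2 + L3*L4)^2 + R2^2 * (L1*L3 + L2*L4)^2 + R3^2 * (L1*L4 + L2*L3)^2
        - 2 * R1 * S1 * ((L1^2 + L2^2) * L3 * L4 + L1 * L2 * (L3^2 + L4^2))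
        - 2 * R2 * S2 * ((L1^2 + L3^2) * L2 * L4 + L1 * L3 * (L2^2 + L4^2))
        - 2 * R3 * S3 * ((L1^2 + L4^2) * L2 * L3 + L1 * L4 * (L2^2 + L3^2)))"

definition K2 :: "'a::field \<Rightarrow> 'a \<Rightarrow> 'a \<Rightarrow> 'a \<Rightarrow> 'a \<Rightarrow> 'a \<Rightarrow> 'a \<Rightarrow> 'a" where
  "K2 m1 m2 m3 m4 L1 L2 L3 =
    (let R1 = r1 m1 m2 m3 m4; S1 = s1 m1 m2 m3 m4;
         R2 = r2 m1 m2 m3 m4; S2 = s2 m1 m2 m3 m4;
         R3 = r3 m1 m2 m3 m4; S3 = s3 m1 m2 m3 m4
     in R3^2 * L1^2 + R2^2 * L2^2 + R1^2 * L3^2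
        - 2 * (R3 * S3 * L2 * L3 + R2 * S2 * L1 * L3 + R1 * S1 * L1 * L2))"

definition K3 :: "'a::field \<Rightarrow> 'a \<Rightarrow> 'a \<Rightarrow> 'a \<Rightarrow> 'a \<Rightarrow> 'a \<Rightarrow> 'a \<Rightarrow> 'a" where
  "K3 m1 m2 m3 m4 L1 L2 L3 =
    (let t = tT m1 m2 m3 m4;
         R1 = r1 m1 m2 m3 m4; S1 = s1 m1 m2 m3 m4;
         R2 = r2 m1 m2 m3 m4; S2 = s2 m1 m2 m3 m4;
         R3 = r3 m1 m2 m3 m4; S3 = s3 m1 m2 m3 m4
     in R1 * S1 * (L1^2 + L2^2) * L3 + R2 * S2 * (L1^2 + L3^2) * L2
        + R3 * S3 * (L2^2 + L3^2) * L1
        + (2 * t - (R1^2 + R2^2 + R3^2)) * L1 * L2 * L3)"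

definition K4 :: "'a::field \<Rightarrow> 'a \<Rightarrow> 'a \<Rightarrow> 'a \<Rightarrow> 'a \<Rightarrow> 'a \<Rightarrow> 'a \<Rightarrow> 'a" where
  "K4 m1 m2 m3 m4 L1 L2 L3 =
    (let R1 = r1 m1 m2 m3 m4; S1 = s1 m1 m2 m3 m4;
         R2 = r2 m1 m2 m3 m4; S2 = s2 m1 m2 m3 m4;
         R3 = r3 m1 m2 m3 m4; S3 = s3 m1 m2 m3 m4
     in R3^2 * L2^2 * L3^2 + R2^2 * L1^2 * L3^2 + R1^2 * L1^2 * L2^2
        - 2 * (R3 * S3 * L1 + R2 * S2 * L2 + R1 * S1 * L3) * L1 * L2 * L3)"

end

theory Submission
  imports Defs
begin

lemma t_eq:
  fixes m1 m2 m3 m4 :: "'a::field"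
  assumes "(2::'a) \<noteq> 0"
  shows "tT m1 m2 m3 m4 = m1*m2*m3*m4*((m1+m2+m3+m4)*(m1+m2-m3-m4)*(m1-m2+m3-m4)*(m1-m2-m3+m4))"
proof -
  have "(2::'a)^4 \<noteq> 0" using assms by (rule power_not_zero)
  hence nz: "(16::'a) \<noteq> 0" by simp
  have "16 * m1 * m2 * m3 * m4 * ((m1 + m2 + m3 + m4) / 2) * ((m1 + m2 - m3 - m4) / 2)
      * ((m1 - m2 + m3 - m4) / 2) * ((m1 - m2 - m3 + m4) / 2)
      = (16 / 16) * (m1*m2*m3*m4*((m1+m2+m3+m4)*(m1+m2-m3-m4)*(m1-m2+m3-m4)*(m1-m2-m3+m4)))"
    using assms nz by (simp add: field_simps)
  also have "... = m1*m2*m3*m4*((m1+m2+m3+m4)*(m1+m2-m3-m4)*(m1-m2+m3-m4)*(m1-m2-m3+m4))"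
    using nz by simp
  finally show ?thesis unfolding tT_def hmu1_def hmu2_def hmu3_def hmu4_def .
qed

lemma big:
  fixes m1 m2 m3 m4 l1 l2 l3 :: "'a::field"
  assumes "(2::'a) \<noteq> 0"
  shows "K3 m1 m2 m3 m4 l1 l2 l3 ^2 - K2 m1 m2 m3 m4 l1 l2 l3 * K4 m1 m2 m3 m4 l1 l2 l3
     = 4*m1*m2*m3*m4*(m1*m2-m3*m4)*(m1*m3-m2*m4)*(m1*m4-m2*m3)
       * ((m1*m4-m2*m3)*l2^2 + (m1^2+m4^2-m2^2-m3^2)*l2*l3 + (m1*m4-m2*m3)*l3^2)
       * ((m1*m3-m2*m4)*l1^2 + (m1^2+m3^2-m2^2-m4^2)*l1*l3 + (m1*m3-m2*m4)*l3^2)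
       * ((m1*m2-m3*m4)*l1^2 + (m1^2+m2^2-m3^2-m4^2)*l1*l2 + (m1*m2-m3*m4)*l2^2)"
  unfolding K2_def K3_def K4_def Let_def t_eq[OF assms] r1_def r2_def r3_def s1_def s2_def s3_def
  by algebra

lemma case_gen:
  fixes kA kB w wa q P e ac g h HH x y z s r ca cb :: "'a::field"
  assumes K2: "kA = w^2 - 4*P*e*q" and K4: "kB = wa^2 - 4*P*e*x^2*q"
    and idd: "e*ac*wa + e^2*g*w + e^2*h*q = e*HH*P*y*z"
    and q: "q = e*y^2 + s*y*z + e*z^2"
    and w: "w = ac*x - e*r" and r: "r = ca*y + cb*z"
    and z: "kA = 0" "kB = 0" "q = 0"
    and nz: "e \<noteq> 0" "HH \<noteq> 0" "P \<noteq> 0" "ac \<noteq> 0"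
  shows "x = 0 \<and> y = 0 \<and> z = 0"
proof -
  have "w = 0" using K2 z by simp
  moreover have "wa = 0" using K4 z by simp
  ultimately have "e*HH*P*y*z = 0" using idd z by simp
  hence yz: "y*z = 0" using nz by simp
  have "e*y^2 + e*z^2 = 0" using q z yz by (simp add: mult.assoc)
  hence yz2: "y^2 + z^2 = 0" using nz by (simp add: distrib_left[symmetric])
  have yy: "y = 0 \<and> z = 0" using yz yz2 by auto
  hence "r = 0" using r by simp
  hence "ac * x = 0" using w \<open>w = 0\<close> by simp
  thus ?thesis using yy nz by simp
qed

theorem lemma1:
  fixes m1 m2 m3 m4 l1 l2 l3 l4 :: "'a::alg_closed_field"
  assumes char2: "(2::'a) \<noteq> 0" and char3: "(3::'a) \<noteq> 0"
    and mu_nz: "m1 \<noteq> 0" "m2 \<noteq> 0" "m3 \<noteq> 0" "m4 \<noteq> 0"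
    and hmu_nz: "hmu1 m1 m2 m3 m4 \<noteq> 0" "hmu2 m1 m2 m3 m4 \<noteq> 0"
                "hmu3 m1 m2 m3 m4 \<noteq> 0" "hmu4 m1 m2 m3 m4 \<noteq> 0"
    and gen: "m1 * m4 \<noteq> m2 * m3" "m1 * m3 \<noteq> m2 * m4" "m1 * m2 \<noteq> m3 * m4"
    and proj: "(l1, l2, l3, l4) \<noteq> (0, 0, 0, 0)"
    and onK: "on_KTet m1 m2 m3 m4 l1 l2 l3 l4"
  shows "(K2 m1 m2 m3 m4 l1 l2 l3 = 0 \<and> K3 m1 m2 m3 m4 l1 l2 l3 = 0
          \<and> K4 m1 m2 m3 m4 l1 l2 l3 = 0)
         \<longleftrightarrow> (l1 = 0 \<and> l2 = 0 \<and> l3 = 0)"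
proof
  assume "l1 = 0 \<and> l2 = 0 \<and> l3 = 0"
  thus "K2 m1 m2 m3 m4 l1 l2 l3 = 0 \<and> K3 m1 m2 m3 m4 l1 l2 l3 = 0
          \<and> K4 m1 m2 m3 m4 l1 l2 l3 = 0"
    by (simp add: K2_def K3_def K4_def Let_def)
next
  assume KK: "K2 m1 m2 m3 m4 l1 l2 l3 = 0 \<and> K3 m1 m2 m3 m4 l1 l2 l3 = 0
          \<and> K4 m1 m2 m3 m4 l1 l2 l3 = 0"
  define A where "A = m1*m2-m3*m4"
  define C where "C = m1*m3-m2*m4"
  define E where "E = m1*m4-m2*m3"
  define ap where "ap = m1*m2+m3*m4"
  define cp where "cp = m1*m3+m2*m4"
  define ep where "ep = m1*m4+m2*m3"
  define P where "P = m1*m2*m3*m4"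
  define HH where "HH = (m1+m2+m3+m4)*(m1+m2-m3-m4)*(m1-m2+m3-m4)*(m1-m2-m3+m4)"
  define q1 where "q1 = E*l2^2 + (m1^2+m4^2-m2^2-m3^2)*l2*l3 + E*l3^2"
  define q2 where "q2 = C*l1^2 + (m1^2+m3^2-m2^2-m4^2)*l1*l3 + C*l3^2"
  define q3 where "q3 = A*l1^2 + (m1^2+m2^2-m3^2-m4^2)*l1*l2 + A*l2^2"
  have Anz: "A \<noteq> 0" using gen unfolding A_def by simp
  have Cnz: "C \<noteq> 0" using gen unfolding C_def by simp
  have Enz: "E \<noteq> 0" using gen unfolding E_def by simp
  have Pnz: "P \<noteq> 0" using mu_nz unfolding P_def by simp
  have f1: "m1+m2+m3+m4 \<noteq> 0" using hmu_nz(1) by (auto simp: hmu1_def)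
  have f2: "m1+m2-m3-m4 \<noteq> 0" using hmu_nz(2) by (auto simp: hmu2_def)
  have f3: "m1-m2+m3-m4 \<noteq> 0" using hmu_nz(3) by (auto simp: hmu3_def)
  have f4: "m1-m2-m3+m4 \<noteq> 0" using hmu_nz(4) by (auto simp: hmu4_def)
  have Hnz: "HH \<noteq> 0" using f1 f2 f3 f4 unfolding HH_def by simp
  have four: "(4::'a) \<noteq> 0"
  proof -
    have "(2::'a)^2 \<noteq> 0" using char2 by (rule power_not_zero)
    thus ?thesis by simp
  qed
  have "4*P*A*C*E*q1*q2*q3 = 0"
    using big[OF char2, of m1 m2 m3 m4 l1 l2 l3] KK
    unfolding P_def A_def C_def E_def q1_def q2_def q3_def by (simp add: mult.assoc)
  hence "q1 = 0 \<or> q2 = 0 \<or> q3 = 0" using four Pnz Anz Cnz Enz by simp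
  thus "l1 = 0 \<and> l2 = 0 \<and> l3 = 0"
  proof (elim disjE)
    assume q: "q1 = 0"
    have "l1 = 0 \<and> l2 = 0 \<and> l3 = 0"
    proof (rule case_gen[where kA = "K2 m1 m2 m3 m4 l1 l2 l3" and kB = "K4 m1 m2 m3 m4 l1 l2 l3" and w = "A*C*l1 - E*(ap*l2+cp*l3)"
        and wa = "A*C*l2*l3 - E*l1*(ap*l3+cp*l2)" and q = q1 and P = P and e = E
        and ac = "A*C" and g = "ap*l3+cp*l2" and h = "ap*cp" and HH = HH
        and s = "m1^2+m4^2-m2^2-m3^2" and r = "ap*l2+cp*l3" and ca = ap and cb = cp])
      show "K2 m1 m2 m3 m4 l1 l2 l3 = (A*C*l1 - E*(ap*l2+cp*l3))^2 - 4*P*E*q1"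
        unfolding K2_def Let_def r1_def r2_def r3_def s1_def s2_def s3_def A_def C_def E_def
          ap_def cp_def P_def q1_def by algebra
      show "K4 m1 m2 m3 m4 l1 l2 l3 = (A*C*l2*l3 - E*l1*(ap*l3+cp*l2))^2 - 4*P*E*l1^2*q1"
        unfolding K4_def Let_def r1_def r2_def r3_def s1_def s2_def s3_def A_def C_def E_def
          ap_def cp_def P_def q1_def by algebra
      show "E*(A*C)*(A*C*l2*l3 - E*l1*(ap*l3+cp*l2)) + E^2*(ap*l3+cp*l2)*(A*C*l1 - E*(ap*l2+cp*l3))
          + E^2*(ap*cp)*q1 = E*HH*P*l2*l3"
        unfolding A_def C_def E_def ap_def cp_def P_def q1_def HH_def by algebra
    qed (use q KK Enz Hnz Pnz Anz Cnz q1_def in auto)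
    thus ?thesis .
  next
    assume q: "q2 = 0"
    have "l2 = 0 \<and> l1 = 0 \<and> l3 = 0"
    proof (rule case_gen[where kA = "K2 m1 m2 m3 m4 l1 l2 l3" and kB = "K4 m1 m2 m3 m4 l1 l2 l3" and w = "A*E*l2 - C*(ap*l1+ep*l3)"
        and wa = "A*E*l1*l3 - C*l2*(ap*l3+ep*l1)" and q = q2 and P = P and e = C
        and ac = "A*E" and g = "ap*l3+ep*l1" and h = "ap*ep" and HH = HH
        and s = "m1^2+m3^2-m2^2-m4^2" and r = "ap*l1+ep*l3" and ca = ap and cb = ep])
      show "K2 m1 m2 m3 m4 l1 l2 l3 = (A*E*l2 - C*(ap*l1+ep*l3))^2 - 4*P*C*q2"
        unfolding K2_def Let_def r1_def r2_def r3_def s1_def s2_def s3_def A_def C_def E_def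
          ap_def ep_def P_def q2_def by algebra
      show "K4 m1 m2 m3 m4 l1 l2 l3 = (A*E*l1*l3 - C*l2*(ap*l3+ep*l1))^2 - 4*P*C*l2^2*q2"
        unfolding K4_def Let_def r1_def r2_def r3_def s1_def s2_def s3_def A_def C_def E_def
          ap_def ep_def P_def q2_def by algebra
      show "C*(A*E)*(A*E*l1*l3 - C*l2*(ap*l3+ep*l1)) + C^2*(ap*l3+ep*l1)*(A*E*l2 - C*(ap*l1+ep*l3))
          + C^2*(ap*ep)*q2 = C*HH*P*l1*l3"
        unfolding A_def C_def E_def ap_def ep_def P_def q2_def HH_def by algebra
    qed (use q KK Enz Hnz Pnz Anz Cnz q2_def in auto)
    thus ?thesis by auto
  next
    assume q: "q3 = 0"
    have "l3 = 0 \<and> l1 = 0 \<and> l2 = 0"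
    proof (rule case_gen[where kA = "K2 m1 m2 m3 m4 l1 l2 l3" and kB = "K4 m1 m2 m3 m4 l1 l2 l3" and w = "C*E*l3 - A*(cp*l1+ep*l2)"
        and wa = "C*E*l1*l2 - A*l3*(cp*l2+ep*l1)" and q = q3 and P = P and e = A
        and ac = "C*E" and g = "cp*l2+ep*l1" and h = "cp*ep" and HH = HH
        and s = "m1^2+m2^2-m3^2-m4^2" and r = "cp*l1+ep*l2" and ca = cp and cb = ep])
      show "K2 m1 m2 m3 m4 l1 l2 l3 = (C*E*l3 - A*(cp*l1+ep*l2))^2 - 4*P*A*q3"
        unfolding K2_def Let_def r1_def r2_def r3_def s1_def s2_def s3_def A_def C_def E_def
          cp_def ep_def P_def q3_def by algebra
      show "K4 m1 m2 m3 m4 l1 l2 l3 = (C*E*l1*l2 - A*l3*(cp*l2+ep*l1))^2 - 4*P*A*l3^2*q3"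
        unfolding K4_def Let_def r1_def r2_def r3_def s1_def s2_def s3_def A_def C_def E_def
          cp_def ep_def P_def q3_def by algebra
      show "A*(C*E)*(C*E*l1*l2 - A*l3*(cp*l2+ep*l1)) + A^2*(cp*l2+ep*l1)*(C*E*l3 - A*(cp*l1+ep*l2))
          + A^2*(cp*ep)*q3 = A*HH*P*l1*l2"
        unfolding A_def C_def E_def cp_def ep_def P_def q3_def HH_def by algebra
    qed (use q KK Enz Hnz Pnz Anz Cnz q3_def in auto)
    thus ?thesis by auto
  qed
qed

end
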